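(* Let $S\in\mathbb{R}_{\geq 0}^{[m]\times[N]}$ be a matrix with non-negative entries. Then \[\mathrm{rk}_+(S)=\min\{|\Gamma(\pi)| : \pi\in\mathrm{Prot}_+(S)\}.\]
   Context: $\mathrm{rk}_+(S)$ is the non-negative rank: the least $r$ such that $S=UW$ with $U\in\mathbb{R}_{\ge0}^{m\times r}$, $W\in\mathbb{R}_{\ge 0}^{r\times N}$. A Markovian protocol $\pi$ in $k\ge 1$ rounds between Alice (who receives an input $i\in[m]$) and Bob (who receives an input $j\in[N]$) is given by: finite sets $V_1,\dots,V_k$ of messages; a first speaker $D_1\in\{A,B\}$, the speakers alternating thereafter ($D_{t+1}\neq D_t$); for the first speaker an initial probability distribution $p^0_{D_1,z}$ on $V_1$ depending on his/her input $z$; for $1\le t\le k-1$, transition probabilities $p^{(t)}_{D_{t+1},z}(u_t,\cdot)$, a probability distribution on $V_{t+1}$ used by the party $D_{t+1}$ with input $z$ after receiving message $u_t$; and finally the party $D_{k+1}$ (the one who received $u_k$) claims an output $\omega\ge 0$ drawn from a distribution on $[0,\infty)$ depending only on his/her input and on $u_k$, with finite mean $\bar\omega_{D_{k+1},z}(u_k)$. (Protocols with either party as first speaker are allowed.) The average output on inputs $(i,j)$ is \[\mathbb{E}[\omega\mid i,j]=\sum_{(u_1,\dots,u_k)} p^0_{D_1,z_1}(u_1)\prod_{t=1}^{k-1}p^{(t)}_{D_{t+1},z_{t+1}}(u_t,u_{t+1})\,\bar\omega_{D_{k+1},z_{k+1}}(u_k),\] where $z_s=i$ if $D_s=A$ and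 $z_s=j$ if $D_s=B$. For $\gamma=(u_1,\dots,u_k)$, let $A_{i,\gamma}$ be the product of those factors in the summand for $\gamma$ belonging to Alice (i.e. depending on her input $i$) and $B_{\gamma,j}$ the product of the factors belonging to Bob, so the summand is $A_{i,\gamma}B_{\gamma,j}$. The protocol is correct for $S$ if for all $(i,j)$ the output is non-negative with probability $1$ and $\mathbb{E}[\omega\mid i,j]=S_{i,j}$; $\mathrm{Prot}_+(S)$ is the set of Markovian protocols correct for $S$. The width is $|\Gamma(\pi)|$, where $\Gamma(\pi)=\{\gamma\in V_1\times\cdots\times V_k : \exists i\in[m],\exists j\in[N],\ A_{i,\gamma}B_{\gamma,j}>0\}$. *)

theory Defs
  imports "HOL-Probability.Probability"
begin

text \<open>Matrices are functions nat => nat => real, only the entries with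
  row index < m and column index < N are relevant.\<close>

definition nonneg_rank :: "nat \<Rightarrow> nat \<Rightarrow> (nat \<Rightarrow> nat \<Rightarrow> real) \<Rightarrow> nat" where
  "nonneg_rank m N S = (LEAST r. \<exists>(U :: nat \<Rightarrow> nat \<Rightarrow> real) (W :: nat \<Rightarrow> nat \<Rightarrow> real).
      (\<forall>i<m. \<forall>l<r. U i l \<ge> 0) \<and> (\<forall>l<r. \<forall>j<N. W l j \<ge> 0) \<and>
      (\<forall>i<m. \<forall>j<N. S i j = (\<Sum>l<r. U i l * W l j)))"

text \<open>Messages are natural numbers;
  round t (1 \<le> t \<le> k) uses the finite message set V t. The speaker
  D_1 is Alice iff alice_first; speakers alternate. p0 z u is the initial
  distribution of the first speaker with input z; trans t z u v is
  p^(t)_{D_{t+1},z}(u,v) for 1 \<le> t \<le> k-1; out z u is the output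
  distribution (a probability measure on the reals concentrated on [0,\<infinity>))
  of the party D_{k+1} with input z after receiving u_k = u.\<close>

record protocol =
  rounds :: nat
  msgs :: "nat \<Rightarrow> nat set"
  alice_first :: bool
  p0 :: "nat \<Rightarrow> nat \<Rightarrow> real"
  trans :: "nat \<Rightarrow> nat \<Rightarrow> nat \<Rightarrow> nat \<Rightarrow> real"
  out :: "nat \<Rightarrow> nat \<Rightarrow> real measure"

text \<open>Is party D_{s+1} Alice? (s = 0, ..., k)\<close>
definition is_alice :: "protocol \<Rightarrow> nat \<Rightarrow> bool" where
  "is_alice \<pi> s = (alice_first \<pi> \<longleftrightarrow> even s)"

definition inputs :: "nat \<Rightarrow> nat \<Rightarrow> protocol \<Rightarrow> nat \<Rightarrow> nat set" where
  "inputs m N \<pi> s = (if is_alice \<pi> s then {..<m} else {..<N})"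

definition mean_out :: "protocol \<Rightarrow> nat \<Rightarrow> nat \<Rightarrow> real" where
  "mean_out \<pi> z u = integral\<^sup>L (out \<pi> z u) (\<lambda>x. x)"

definition well_formed :: "nat \<Rightarrow> nat \<Rightarrow> protocol \<Rightarrow> bool" where
  "well_formed m N \<pi> \<longleftrightarrow>
     rounds \<pi> \<ge> 1 \<and>
     (\<forall>t\<in>{1..rounds \<pi>}. finite (msgs \<pi> t)) \<and>
     (\<forall>z\<in>inputs m N \<pi> 0.
        (\<forall>u\<in>msgs \<pi> 1. p0 \<pi> z u \<ge> 0) \<and> (\<Sum>u\<in>msgs \<pi> 1. p0 \<pi> z u) = 1) \<and>
     (\<forall>t\<in>{1..rounds \<pi> - 1}. \<forall>z\<in>inputs m N \<pi> t. \<forall>u\<in>msgs \<pi> t.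
        (\<forall>v\<in>msgs \<pi> (t+1). trans \<pi> t z u v \<ge> 0) \<and>
        (\<Sum>v\<in>msgs \<pi> (t+1). trans \<pi> t z u v) = 1) \<and>
     (\<forall>z\<in>inputs m N \<pi> (rounds \<pi>). \<forall>u\<in>msgs \<pi> (rounds \<pi>).
        prob_space (out \<pi> z u) \<and> sets (out \<pi> z u) = sets borel \<and>
        (AE x in out \<pi> z u. x \<ge> 0) \<and> integrable (out \<pi> z u) (\<lambda>x. x))"

text \<open>Transcripts gamma = (u_1,...,u_k) as lists, gamma ! (t-1) = u_t.\<close>
definition transcripts :: "protocol \<Rightarrow> nat list set" where
  "transcripts \<pi> = {\<gamma>. length \<gamma> = rounds \<pi> \<and> (\<forall>t<rounds \<pi>. \<gamma> ! t \<in> msgs \<pi> (t+1))}"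

text \<open>The s-th factor (s = 0..k) of the summand for gamma, evaluated at input z
  of its owner D_{s+1}.\<close>
definition factor :: "protocol \<Rightarrow> nat \<Rightarrow> nat \<Rightarrow> nat list \<Rightarrow> real" where
  "factor \<pi> z s \<gamma> =
     (if s = 0 then p0 \<pi> z (\<gamma> ! 0)
      else if s < rounds \<pi> then trans \<pi> s z (\<gamma> ! (s - 1)) (\<gamma> ! s)
      else mean_out \<pi> z (\<gamma> ! (rounds \<pi> - 1)))"

definition A_part :: "protocol \<Rightarrow> nat \<Rightarrow> nat list \<Rightarrow> real" where
  "A_part \<pi> i \<gamma> = (\<Prod>s\<in>{s. s \<le> rounds \<pi> \<and> is_alice \<pi> s}. factor \<pi> i s \<gamma>)"

definition B_part :: "protocol \<Rightarrow> nat list \<Rightarrow> nat \<Rightarrow> real" where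
  "B_part \<pi> \<gamma> j = (\<Prod>s\<in>{s. s \<le> rounds \<pi> \<and> \<not> is_alice \<pi> s}. factor \<pi> j s \<gamma>)"

definition expected_output :: "protocol \<Rightarrow> nat \<Rightarrow> nat \<Rightarrow> real" where
  "expected_output \<pi> i j = (\<Sum>\<gamma>\<in>transcripts \<pi>. A_part \<pi> i \<gamma> * B_part \<pi> \<gamma> j)"

text \<open>Prot_+(S). Non-negativity of the output with probability 1 is
  part of well_formed (outputs are distributions on [0,\<infinity>)).\<close>
definition correct_for :: "nat \<Rightarrow> nat \<Rightarrow> (nat \<Rightarrow> nat \<Rightarrow> real) \<Rightarrow> protocol \<Rightarrow> bool" where
  "correct_for m N S \<pi> \<longleftrightarrow> well_formed m N \<pi> \<and>
     (\<forall>i<m. \<forall>j<N. expected_output \<pi> i j = S i j)"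

definition width :: "nat \<Rightarrow> nat \<Rightarrow> protocol \<Rightarrow> nat" where
  "width m N \<pi> = card {\<gamma>\<in>transcripts \<pi>. \<exists>i<m. \<exists>j<N. A_part \<pi> i \<gamma> * B_part \<pi> \<gamma> j > 0}"

end

theory Submission
  imports Defs
begin

lemma return_facts:
  fixes x :: real
  assumes "x \<ge> 0"
  shows "prob_space (return borel x) \<and> sets (return borel x) = sets borel \<and>
         (AE y in return borel x. y \<ge> 0) \<and> integrable (return borel x) (\<lambda>y. y)
         \<and> integral\<^sup>L (return borel x) (\<lambda>y. y) = x"
proof -
  interpret prob_space "return borel x" by (rule prob_space_return) simp
  have ae: "AE y in return borel x. y = x"
    by (subst AE_return) auto
  have "integrable (return borel x) (\<lambda>y. x)" by simp
  then have "integrable (return borel x) (\<lambda>y. y)"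
    by (subst integrable_cong_AE[where g="\<lambda>y. x"]) (use ae in auto)
  moreover have "AE y in return borel x. y \<ge> 0" using assms by (subst AE_return) auto
  moreover have "integral\<^sup>L (return borel x) (\<lambda>y. y) = x"
    by (subst integral_return) auto
  ultimately show ?thesis using prob_space_axioms by simp
qed

lemma return_wf:
  fixes x :: real
  assumes "x \<ge> 0"
  shows "prob_space (return borel x) \<and> sets (return borel x) = sets borel \<and>
         (AE y in return borel x. y \<ge> 0) \<and> integrable (return borel x) (\<lambda>y. y)"
  using return_facts[OF assms] by (elim conjE) (intro conjI; assumption)

lemma transcripts_finite:
  assumes "well_formed m N \<pi>"
  shows "finite (transcripts \<pi>)"
proof -
  let ?V = "\<Union>t\<in>{1..rounds \<pi>}. msgs \<pi> t"
  have fV: "finite ?V" using assms unfolding well_formed_def by auto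
  have "transcripts \<pi> \<subseteq> {xs. set xs \<subseteq> ?V \<and> length xs = rounds \<pi>}"
  proof
    fix xs assume "xs \<in> transcripts \<pi>"
    then have l: "length xs = rounds \<pi>" and h: "\<forall>t<rounds \<pi>. xs ! t \<in> msgs \<pi> (t+1)"
      unfolding transcripts_def by auto
    have "set xs \<subseteq> ?V"
    proof
      fix y assume "y \<in> set xs"
      then obtain t where "t < length xs" "xs ! t = y" by (auto simp: in_set_conv_nth)
      then show "y \<in> ?V" using h l by (intro UN_I[of "t+1"]) auto
    qed
    then show "xs \<in> {xs. set xs \<subseteq> ?V \<and> length xs = rounds \<pi>}" using l by auto
  qed
  then show ?thesis using finite_lists_length_eq[OF fV] by (rule finite_subset)
qed

lemma factor_nonneg:
  assumes wf: "well_formed m N \<pi>" and g: "\<gamma> \<in> transcripts \<pi>" and s: "s \<le> rounds \<pi>"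
    and z: "z \<in> inputs m N \<pi> s"
  shows "factor \<pi> z s \<gamma> \<ge> 0"
proof -
  have k: "rounds \<pi> \<ge> 1" using wf unfolding well_formed_def by auto
  have gt: "\<And>t. t < rounds \<pi> \<Longrightarrow> \<gamma> ! t \<in> msgs \<pi> (t+1)" using g unfolding transcripts_def by auto
  consider "s = 0" | "0 < s" "s < rounds \<pi>" | "s = rounds \<pi>" "s \<noteq> 0" using s by linarith
  then show ?thesis
  proof cases
    case 1
    then show ?thesis using wf z gt[of 0] k unfolding well_formed_def factor_def by auto
  next
    case 2
    have a: "\<gamma> ! (s-1) \<in> msgs \<pi> s" using gt[of "s-1"] 2 by simp
    have b: "\<gamma> ! s \<in> msgs \<pi> (s+1)" using gt[of s] 2 by simp
    have "s \<in> {1..rounds \<pi> - 1}" using 2 by auto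
    then show ?thesis using wf z a b 2 unfolding well_formed_def factor_def by auto
  next
    case 3
    have a: "\<gamma> ! (rounds \<pi> - 1) \<in> msgs \<pi> (rounds \<pi>)" using gt[of "rounds \<pi> - 1"] k by simp
    have "AE x in out \<pi> z (\<gamma> ! (rounds \<pi> - 1)). x \<ge> 0"
      using wf z a 3 unfolding well_formed_def by auto
    then have "mean_out \<pi> z (\<gamma> ! (rounds \<pi> - 1)) \<ge> 0"
      unfolding mean_out_def by (rule integral_nonneg_AE)
    then show ?thesis using 3 unfolding factor_def by auto
  qed
qed

lemma A_nonneg:
  assumes "well_formed m N \<pi>" "\<gamma> \<in> transcripts \<pi>" "i < m"
  shows "A_part \<pi> i \<gamma> \<ge> 0"
  unfolding A_part_def
  by (rule prod_nonneg) (use assms in \<open>auto intro!: factor_nonneg simp: inputs_def\<close>)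

lemma B_nonneg:
  assumes "well_formed m N \<pi>" "\<gamma> \<in> transcripts \<pi>" "j < N"
  shows "B_part \<pi> \<gamma> j \<ge> 0"
  unfolding B_part_def
  by (rule prod_nonneg) (use assms in \<open>auto intro!: factor_nonneg simp: inputs_def\<close>)

lemma rank_le_width:
  assumes c: "correct_for m N S \<pi>"
  shows "nonneg_rank m N S \<le> width m N \<pi>"
proof -
  have wf: "well_formed m N \<pi>" using c unfolding correct_for_def by auto
  define G where "G = {\<gamma>\<in>transcripts \<pi>. \<exists>i<m. \<exists>j<N. A_part \<pi> i \<gamma> * B_part \<pi> \<gamma> j > 0}"
  have fT: "finite (transcripts \<pi>)" using transcripts_finite[OF wf] .
  have GT: "G \<subseteq> transcripts \<pi>" unfolding G_def by auto
  have fG: "finite G" using fT GT finite_subset by blast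
  obtain h where h: "bij_betw h {0..<card G} G" using ex_bij_betw_nat_finite[OF fG] by blast
  define U where "U = (\<lambda>i l. A_part \<pi> i (h l))"
  define W where "W = (\<lambda>l j. B_part \<pi> (h l) j)"
  have hG: "\<And>l. l < card G \<Longrightarrow> h l \<in> G" using h by (auto simp: bij_betw_def)
  have "(\<forall>i<m. \<forall>l<card G. U i l \<ge> 0) \<and> (\<forall>l<card G. \<forall>j<N. W l j \<ge> 0) \<and>
      (\<forall>i<m. \<forall>j<N. S i j = (\<Sum>l<card G. U i l * W l j))"
  proof (intro conjI allI impI)
    fix i l assume "i < m" "l < card G"
    then show "U i l \<ge> 0" unfolding U_def using A_nonneg[OF wf] hG GT by blast
  next
    fix l j assume "l < card G" "j < N"
    then show "W l j \<ge> 0" unfolding W_def using B_nonneg[OF wf] hG GT by blast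
  next
    fix i j assume ij: "i < m" "j < N"
    have "S i j = (\<Sum>\<gamma>\<in>transcripts \<pi>. A_part \<pi> i \<gamma> * B_part \<pi> \<gamma> j)"
      using c ij unfolding correct_for_def expected_output_def by auto
    also have "\<dots> = (\<Sum>\<gamma>\<in>G. A_part \<pi> i \<gamma> * B_part \<pi> \<gamma> j)"
    proof (rule sum.mono_neutral_right[OF fT GT])
      show "\<forall>\<gamma>\<in>transcripts \<pi> - G. A_part \<pi> i \<gamma> * B_part \<pi> \<gamma> j = 0"
      proof
        fix \<gamma> assume g: "\<gamma> \<in> transcripts \<pi> - G"
        then have "A_part \<pi> i \<gamma> * B_part \<pi> \<gamma> j \<ge> 0"
          using A_nonneg[OF wf _ ij(1)] B_nonneg[OF wf _ ij(2)] by auto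
        moreover have "\<not> A_part \<pi> i \<gamma> * B_part \<pi> \<gamma> j > 0" using g ij unfolding G_def by auto
        ultimately show "A_part \<pi> i \<gamma> * B_part \<pi> \<gamma> j = 0" by linarith
      qed
    qed
    also have "\<dots> = (\<Sum>l\<in>{0..<card G}. A_part \<pi> i (h l) * B_part \<pi> (h l) j)"
      using sum.reindex_bij_betw[OF h, of "\<lambda>\<gamma>. A_part \<pi> i \<gamma> * B_part \<pi> \<gamma> j"] by simp
    finally show "S i j = (\<Sum>l<card G. U i l * W l j)"
      unfolding U_def W_def by (simp add: atLeast0LessThan)
  qed
  then have "nonneg_rank m N S \<le> card G"
    unfolding nonneg_rank_def by (intro Least_le) blast
  then show ?thesis unfolding width_def G_def .
qed


lemma rank_exists:
  assumes "\<forall>i<m. \<forall>j<N. S i j \<ge> 0"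
  shows "\<exists>(U :: nat \<Rightarrow> nat \<Rightarrow> real) (W :: nat \<Rightarrow> nat \<Rightarrow> real).
      (\<forall>i<m. \<forall>l<nonneg_rank m N S. U i l \<ge> 0) \<and> (\<forall>l<nonneg_rank m N S. \<forall>j<N. W l j \<ge> 0) \<and>
      (\<forall>i<m. \<forall>j<N. S i j = (\<Sum>l<nonneg_rank m N S. U i l * W l j))"
  unfolding nonneg_rank_def
proof (rule LeastI_ex)
  define U0 :: "nat \<Rightarrow> nat \<Rightarrow> real" where "U0 = (\<lambda>i l. if i = l then 1 else 0)"
  have "\<forall>i<m. \<forall>j<N. S i j = (\<Sum>l<m. U0 i l * S l j)"
  proof (intro allI impI)
    fix i j assume "i < m" "j < N"
    have "(\<Sum>l<m. U0 i l * S l j) = (\<Sum>l<m. if i = l then S l j else 0)"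
      by (intro sum.cong) (auto simp: U0_def)
    then show "S i j = (\<Sum>l<m. U0 i l * S l j)" using \<open>i < m\<close> by simp
  qed
  then have h: "(\<forall>i<m. \<forall>l<m. U0 i l \<ge> 0) \<and> (\<forall>l<m. \<forall>j<N. S l j \<ge> 0) \<and>
      (\<forall>i<m. \<forall>j<N. S i j = (\<Sum>l<m. U0 i l * S l j))" using assms by (auto simp: U0_def)
  show "\<exists>(r::nat) U W. (\<forall>i<m. \<forall>l<r. U i l \<ge> (0::real)) \<and> (\<forall>l<r. \<forall>j<N. W l j \<ge> (0::real)) \<and>
      (\<forall>i<m. \<forall>j<N. S i j = (\<Sum>l<r. U i l * W l j))"
    by (intro exI[of _ m] exI[of _ U0] exI[of _ S]) (rule h)
qed

lemma construct:
  fixes U W :: "nat \<Rightarrow> nat \<Rightarrow> real"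
  assumes U: "\<forall>i<m. \<forall>l<r. U i l \<ge> 0" and W: "\<forall>l<r. \<forall>j<N. W l j \<ge> 0"
    and S: "\<forall>i<m. \<forall>j<N. S i j = (\<Sum>l<r. U i l * W l j)"
  shows "\<exists>\<pi>. correct_for m N S \<pi> \<and> width m N \<pi> \<le> r"
proof -
  define \<rho> where "\<rho> = (\<lambda>i. \<Sum>l<r. U i l)"
  define c where "c = 1 + (\<Sum>i<m. \<rho> i)"
  have \<rho>0: "\<And>i. i < m \<Longrightarrow> \<rho> i \<ge> 0" unfolding \<rho>_def using U by (auto intro: sum_nonneg)
  have c\<rho>: "\<And>i. i < m \<Longrightarrow> \<rho> i \<le> c - 1" unfolding c_def
    using \<rho>0 by (auto intro!: member_le_sum)
  have c0: "c > 0" using c\<rho>[of 0] \<rho>0[of 0] unfolding c_def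
    using \<rho>0 sum_nonneg[of "{..<m}" \<rho>] by auto
  define val where "val = (\<lambda>j l. if l < r then c * W l j else 0)"
  define \<pi> where "\<pi> = \<lparr> rounds = 1, msgs = (\<lambda>t. {..r}), alice_first = True,
     p0 = (\<lambda>i l. if l < r then U i l / c else 1 - \<rho> i / c),
     trans = (\<lambda>_ _ _ _. 0), out = (\<lambda>j l. return borel (val j l)) \<rparr>"
  have val0: "\<And>j l. j < N \<Longrightarrow> val j l \<ge> 0" unfolding val_def using W c0 by auto
  have ia: "is_alice \<pi> 0" "\<not> is_alice \<pi> 1" unfolding is_alice_def \<pi>_def by auto
  have inp: "inputs m N \<pi> 0 = {..<m}" "inputs m N \<pi> 1 = {..<N}"
    unfolding inputs_def using ia by auto
  have mo: "\<And>j l. j < N \<Longrightarrow> mean_out \<pi> j l = val j l"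
    unfolding mean_out_def \<pi>_def using return_facts[OF val0] by simp
  have outwf: "prob_space (out \<pi> z u) \<and> sets (out \<pi> z u) = sets borel \<and>
        (AE x in out \<pi> z u. x \<ge> 0) \<and> integrable (out \<pi> z u) (\<lambda>x. x)"
    if z: "z \<in> inputs m N \<pi> (rounds \<pi>)" for z u
  proof -
    have zN: "z < N" using z inp unfolding \<pi>_def by auto
    have o: "out \<pi> z u = return borel (val z u)" by (simp add: \<pi>_def)
    show ?thesis unfolding o by (rule return_wf[OF val0[OF zN]])
  qed
  have e: "{1..rounds \<pi> - 1} = {}" unfolding \<pi>_def by simp
  have wf: "well_formed m N \<pi>"
  proof (unfold well_formed_def e ball_empty, intro conjI ballI TrueI)
    show "1 \<le> rounds \<pi>" unfolding \<pi>_def by simp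
  next
    fix t assume "t \<in> {1..rounds \<pi>}" then show "finite (msgs \<pi> t)" unfolding \<pi>_def by simp
  next
    fix z u assume z: "z \<in> inputs m N \<pi> 0" and "u \<in> msgs \<pi> 1"
    then have "z < m" using inp by auto
    then show "p0 \<pi> z u \<ge> 0" unfolding \<pi>_def using U c0 c\<rho>[of z]
      by (auto simp: field_simps)
  next
    fix z assume z: "z \<in> inputs m N \<pi> 0"
    have "(\<Sum>u\<in>{..r}. p0 \<pi> z u) = (\<Sum>u<r. U z u / c) + (1 - \<rho> z / c)"
      unfolding \<pi>_def by (simp add: lessThan_Suc_atMost[symmetric])
    also have "\<dots> = 1" unfolding \<rho>_def by (simp add: sum_divide_distrib)
    finally show "(\<Sum>u\<in>msgs \<pi> 1. p0 \<pi> z u) = 1" unfolding \<pi>_def by simp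
  next
    fix z u assume z: "z \<in> inputs m N \<pi> (rounds \<pi>)"
    then show "prob_space (out \<pi> z u)" using outwf by blast
  next
    fix z u assume z: "z \<in> inputs m N \<pi> (rounds \<pi>)"
    then show "sets (out \<pi> z u) = sets borel" using outwf by blast
  next
    fix z u assume z: "z \<in> inputs m N \<pi> (rounds \<pi>)"
    then show "AE x in out \<pi> z u. x \<ge> 0" using outwf by blast
  next
    fix z u assume z: "z \<in> inputs m N \<pi> (rounds \<pi>)"
    then show "integrable (out \<pi> z u) (\<lambda>x. x)" using outwf by blast
  qed simp_all
  have T: "transcripts \<pi> = (\<lambda>l. [l]) ` {..r}"
  proof
    show "transcripts \<pi> \<subseteq> (\<lambda>l. [l]) ` {..r}"
    proof
      fix g assume "g \<in> transcripts \<pi>"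
      then have "length g = 1" "g ! 0 \<in> {..r}" unfolding transcripts_def \<pi>_def by auto
      then show "g \<in> (\<lambda>l. [l]) ` {..r}"
        by (intro image_eqI[of _ _ "g ! 0"]) (auto simp: length_Suc_conv)
    qed
  qed (auto simp: transcripts_def \<pi>_def)
  have sA: "{s. s \<le> rounds \<pi> \<and> is_alice \<pi> s} = {0}" using ia unfolding \<pi>_def by (auto simp: le_Suc_eq)
  have sB: "{s. s \<le> rounds \<pi> \<and> \<not> is_alice \<pi> s} = {1}" using ia unfolding \<pi>_def by (auto simp: le_Suc_eq)
  have AB: "\<And>i j l. j < N \<Longrightarrow> A_part \<pi> i [l] * B_part \<pi> [l] j =
      (if l < r then U i l / c else 1 - \<rho> i / c) * val j l"
    unfolding A_part_def B_part_def sA sB factor_def using mo by (simp add: \<pi>_def)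
  have EO: "expected_output \<pi> i j = S i j" if ij: "i < m" "j < N" for i j
  proof -
    have "expected_output \<pi> i j = (\<Sum>l\<in>{..r}. A_part \<pi> i [l] * B_part \<pi> [l] j)"
      unfolding expected_output_def T by (subst sum.reindex) (auto simp: inj_on_def)
    also have "\<dots> = (\<Sum>l<r. U i l * W l j)"
      using ij c0 by (simp add: AB val_def lessThan_Suc_atMost[symmetric])
    finally show ?thesis using S ij by simp
  qed
  have "{\<gamma>\<in>transcripts \<pi>. \<exists>i<m. \<exists>j<N. A_part \<pi> i \<gamma> * B_part \<pi> \<gamma> j > 0} \<subseteq> (\<lambda>l. [l]) ` {..<r}"
  proof
    fix g assume "g \<in> {\<gamma>\<in>transcripts \<pi>. \<exists>i<m. \<exists>j<N. A_part \<pi> i \<gamma> * B_part \<pi> \<gamma> j > 0}"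
    then obtain l i j where g: "g = [l]" "l \<le> r" "j < N" "A_part \<pi> i [l] * B_part \<pi> [l] j > 0"
      unfolding T by auto
    then have "l \<noteq> r" using AB[of j i l] by (auto simp: val_def)
    then show "g \<in> (\<lambda>l. [l]) ` {..<r}" using g by auto
  qed
  then have "width m N \<pi> \<le> card ((\<lambda>l. [l]) ` {..<r})"
    unfolding width_def by (intro card_mono) auto
  also have "\<dots> \<le> r" using card_image_le[of "{..<r}" "\<lambda>l. [l]"] by simp
  finally show ?thesis using wf EO unfolding correct_for_def by blast
qed

theorem proposition1:
  fixes m N :: nat and S :: "nat \<Rightarrow> nat \<Rightarrow> real"
  assumes "\<forall>i<m. \<forall>j<N. S i j \<ge> 0"
  shows "(\<exists>\<pi>. correct_for m N S \<pi> \<and> width m N \<pi> = nonneg_rank m N S) \<and>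
         (\<forall>\<pi>. correct_for m N S \<pi> \<longrightarrow> nonneg_rank m N S \<le> width m N \<pi>)"
proof
  show "\<forall>\<pi>. correct_for m N S \<pi> \<longrightarrow> nonneg_rank m N S \<le> width m N \<pi>"
    using rank_le_width by blast
  obtain U W where "(\<forall>i<m. \<forall>l<nonneg_rank m N S. U i l \<ge> 0)"
    "(\<forall>l<nonneg_rank m N S. \<forall>j<N. W l j \<ge> 0)"
    "(\<forall>i<m. \<forall>j<N. S i j = (\<Sum>l<nonneg_rank m N S. U i l * W l j))"
    using rank_exists[OF assms] by blast
  from construct[OF this] obtain \<pi> where "correct_for m N S \<pi>" "width m N \<pi> \<le> nonneg_rank m N S"
    by blast
  with rank_le_width[OF this(1)] show "\<exists>\<pi>. correct_for m N S \<pi> \<and> width m N \<pi> = nonneg_rank m N S"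
    by (intro exI[of _ \<pi>]) auto
qed

end
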